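(* Let $M$ be a bounded pointed metric space and let $X\subset \mathrm{Lip}_0(M)=\mathcal F(M)^*$ be an isometric predual of $\mathcal F(M)$ (i.e. $X^*=\mathcal F(M)$ isometrically via the natural duality). Then the following are equivalent: (i) there is a compact Hausdorff topology $\tau$ on $M$ such that $X\subset \mathrm{Lip}_0(M)\cap\mathcal C_\tau(M)$; (ii) $\delta(M)$ is $\sigma(\mathcal F(M),X)$-closed.
   Context: A pointed metric space $M$ has a distinguished origin $0$. $\mathrm{Lip}_0(M)$ is the Banach space of real Lipschitz functions on $M$ vanishing at $0$ with the best Lipschitz constant as norm; $\delta(x)$ is evaluation at $x$, and the Lipschitz free space $\mathcal F(M)$ is the closed linear span of $\delta(M)$ in $\mathrm{Lip}_0(M)^*$, with $\mathcal F(M)^*=\mathrm{Lip}_0(M)$. $\mathcal C_\tau(M)$ denotes the real functions on $M$ continuous for the topology $\tau$. $\sigma(\mathcal F(M),X)$ is the topology of pointwise convergence on elements of $X$. *)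

theory Defs
  imports "HOL-Analysis.Analysis"
begin

text \<open>The pointed metric space M is the whole type 'a (a metric space) with base point z.
  Lipschitz functions are functions 'a => real; functionals on Lip_0(M) are functions
  ('a => real) => real, normalised to be 0 outside Lip_0(M).\<close>

definition lip0 :: "'a::metric_space \<Rightarrow> ('a \<Rightarrow> real) set" where
  "lip0 z = {f. (\<exists>L. L-lipschitz_on UNIV f) \<and> f z = 0}"

definition lipnorm :: "('a::metric_space \<Rightarrow> real) \<Rightarrow> real" where
  "lipnorm f = Inf {L. L-lipschitz_on UNIV f}"

definition bdd_lin_on :: "('a::metric_space \<Rightarrow> real) set \<Rightarrow> (('a \<Rightarrow> real) \<Rightarrow> real) \<Rightarrow> bool" where
  "bdd_lin_on S \<phi> \<longleftrightarrow>
     (\<forall>f\<in>S. \<forall>g\<in>S. \<forall>a b. \<phi> (\<lambda>x. a * f x + b * g x) = a * \<phi> f + b * \<phi> g) \<and>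
     (\<exists>C. \<forall>f\<in>S. \<bar>\<phi> f\<bar> \<le> C * lipnorm f)"

definition dnorm_on :: "('a::metric_space \<Rightarrow> real) set \<Rightarrow> (('a \<Rightarrow> real) \<Rightarrow> real) \<Rightarrow> real" where
  "dnorm_on S \<phi> = Sup {\<bar>\<phi> f\<bar> | f. f \<in> S \<and> lipnorm f \<le> 1}"

definition lipdual :: "'a::metric_space \<Rightarrow> (('a \<Rightarrow> real) \<Rightarrow> real) set" where
  "lipdual z = {\<phi>. bdd_lin_on (lip0 z) \<phi> \<and> (\<forall>f. f \<notin> lip0 z \<longrightarrow> \<phi> f = 0)}"

definition dirac :: "'a::metric_space \<Rightarrow> 'a \<Rightarrow> (('a \<Rightarrow> real) \<Rightarrow> real)" where
  "dirac z x = (\<lambda>f. if f \<in> lip0 z then f x else 0)"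

definition free_space :: "'a::metric_space \<Rightarrow> (('a \<Rightarrow> real) \<Rightarrow> real) set" where
  "free_space z = {\<mu> \<in> lipdual z. \<forall>e>0. \<exists>(n::nat) (a::nat \<Rightarrow> real) (p::nat \<Rightarrow> 'a).
       dnorm_on (lip0 z) (\<lambda>f. \<mu> f - (\<Sum>i<n. a i * dirac z (p i) f)) < e}"

text \<open>X \<subseteq> Lip_0(M) is an isometric predual of F(M) via the natural duality:
  X is a closed linear subspace of Lip_0(M), restriction F(M) -> X^* is onto and isometric.\<close>
definition isometric_predual :: "'a::metric_space \<Rightarrow> ('a \<Rightarrow> real) set \<Rightarrow> bool" where
  "isometric_predual z X \<longleftrightarrow>
     X \<subseteq> lip0 z \<and> (\<lambda>x. 0) \<in> X \<and>
     (\<forall>f\<in>X. \<forall>g\<in>X. \<forall>a b. (\<lambda>x. a * f x + b * g x) \<in> X) \<and>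
     (\<forall>f\<in>lip0 z. (\<forall>e>0. \<exists>g\<in>X. lipnorm (\<lambda>x. f x - g x) < e) \<longrightarrow> f \<in> X) \<and>
     (\<forall>\<phi>. bdd_lin_on X \<phi> \<longrightarrow> (\<exists>\<mu>\<in>free_space z. \<forall>f\<in>X. \<mu> f = \<phi> f)) \<and>
     (\<forall>\<mu>\<in>free_space z. dnorm_on (lip0 z) \<mu> = dnorm_on X \<mu>)"

definition weak_top :: "'a::metric_space \<Rightarrow> ('a \<Rightarrow> real) set \<Rightarrow> (('a \<Rightarrow> real) \<Rightarrow> real) topology" where
  "weak_top z X = subtopology
     (topology_generated_by {{\<mu>. \<mu> f \<in> U} | f U. f \<in> X \<and> open U}) (free_space z)"

end

theory Submission
  imports Defs
begin


lemma lip0_lipnorm: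
  assumes "f \<in> lip0 z"
  shows "(lipnorm f)-lipschitz_on UNIV f" "0 \<le> lipnorm f"
proof -
  obtain L where L: "L-lipschitz_on UNIV f" using assms by (auto simp: lip0_def)
  let ?S = "{L. L-lipschitz_on UNIV f}"
  have ne: "?S \<noteq> {}" using L by auto
  have bb: "bdd_below ?S" by (rule bdd_belowI[of _ 0]) (auto simp: lipschitz_on_def)
  show nn: "0 \<le> lipnorm f" unfolding lipnorm_def
    by (rule cInf_greatest[OF ne]) (auto simp: lipschitz_on_def)
  show "(lipnorm f)-lipschitz_on UNIV f"
  proof (rule lipschitz_onI[OF _ nn])
    fix x y :: 'a
    show "dist (f x) (f y) \<le> lipnorm f * dist x y"
    proof (cases "x = y")
      case True then show ?thesis by simp
    next
      case False
      then have dp: "dist x y > 0" by simp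
      have "dist (f x) (f y) / dist x y \<le> lipnorm f" unfolding lipnorm_def
      proof (rule cInf_greatest[OF ne])
        fix M assume "M \<in> ?S"
        then have "dist (f x) (f y) \<le> M * dist x y" by (auto dest: lipschitz_onD)
        then show "dist (f x) (f y) / dist x y \<le> M" using dp by (simp add: divide_le_eq)
      qed
      then show ?thesis using dp by (simp add: divide_le_eq mult.commute)
    qed
  qed
qed

lemma lip0_bound:
  assumes "f \<in> lip0 z"
  shows "\<bar>f x\<bar> \<le> lipnorm f * dist x z"
proof -
  have "f z = 0" using assms by (simp add: lip0_def)
  moreover have "dist (f x) (f z) \<le> lipnorm f * dist x z"
    using lip0_lipnorm[OF assms] by (auto dest: lipschitz_onD)
  ultimately show ?thesis by (simp add: dist_real_def)
qed

lemma lipnorm_le: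
  assumes "L-lipschitz_on UNIV f"
  shows "lipnorm f \<le> L"
  unfolding lipnorm_def
  by (rule cInf_lower) (use assms in \<open>auto intro!: bdd_belowI[of _ 0] simp: lipschitz_on_def\<close>)

lemma lipnorm_cmult:
  assumes "f \<in> lip0 z"
  shows "lipnorm (\<lambda>x. c * f x) \<le> \<bar>c\<bar> * lipnorm f"
  by (rule lipnorm_le) (rule lipschitz_on_cmult_real[OF lip0_lipnorm(1)[OF assms]])

lemma lip0_cmult: "f \<in> lip0 z \<Longrightarrow> (\<lambda>x. c * f x) \<in> lip0 z"
  unfolding lip0_def by (auto intro: lipschitz_on_cmult_real)

lemma lip0_zero: "(\<lambda>x. 0) \<in> lip0 z"
  unfolding lip0_def by (auto intro: lipschitz_on_constant)

lemma lipnorm_zero: "lipnorm (\<lambda>x::'a::metric_space. 0::real) = 0"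
  using lipnorm_le[OF lipschitz_on_constant[of UNIV "0::real"]] lip0_lipnorm(2)[OF lip0_zero]
  by (metis order_antisym)

lemma lip0_lin: "f \<in> lip0 z \<Longrightarrow> g \<in> lip0 z \<Longrightarrow> (\<lambda>x. a * f x + b * g x) \<in> lip0 z"
proof -
  assume f: "f \<in> lip0 z" and g: "g \<in> lip0 z"
  have "(\<bar>a\<bar> * lipnorm f + \<bar>b\<bar> * lipnorm g)-lipschitz_on UNIV (\<lambda>x. a * f x + b * g x)"
    by (intro lipschitz_on_add lipschitz_on_cmult_real lip0_lipnorm[OF f] lip0_lipnorm[OF g])
  then show ?thesis using f g by (auto simp: lip0_def)
qed



lemma lz1: "lipnorm (\<lambda>x::'a::metric_space. 0::real) \<le> 1"
  by (simp add: lipnorm_zero)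

lemma bdd_lin_boundI:
  assumes "S \<subseteq> lip0 z" "bdd_lin_on S \<phi>"
  obtains C where "C \<ge> 0" "\<And>f. f \<in> S \<Longrightarrow> \<bar>\<phi> f\<bar> \<le> C * lipnorm f"
proof -
  obtain C where C: "\<And>f. f \<in> S \<Longrightarrow> \<bar>\<phi> f\<bar> \<le> C * lipnorm f" using assms(2) unfolding bdd_lin_on_def by blast
  have "\<And>f. f \<in> S \<Longrightarrow> \<bar>\<phi> f\<bar> \<le> \<bar>C\<bar> * lipnorm f"
  proof -
    fix f assume f: "f \<in> S"
    have "0 \<le> lipnorm f" using f assms(1) lip0_lipnorm(2) by blast
    then have "C * lipnorm f \<le> \<bar>C\<bar> * lipnorm f" by (simp add: mult_right_mono)
    then show "\<bar>\<phi> f\<bar> \<le> \<bar>C\<bar> * lipnorm f" using C[OF f] by linarith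
  qed
  then show ?thesis using that[of "\<bar>C\<bar>"] by auto
qed

lemma bdd_lin_dirac: "bdd_lin_on (lip0 z) (dirac z x)"
  unfolding bdd_lin_on_def
proof (intro conjI ballI allI exI)
  fix f g a b assume "f \<in> lip0 z" "g \<in> lip0 z"
  then show "dirac z x (\<lambda>x. a * f x + b * g x) = a * dirac z x f + b * dirac z x g"
    by (simp add: dirac_def lip0_lin)
next
  fix f assume f: "f \<in> lip0 z"
  show "\<bar>dirac z x f\<bar> \<le> dist x z * lipnorm f"
    using lip0_bound[OF f, of x] f by (simp add: dirac_def mult.commute)
qed

lemma bdd_lin_zero: "bdd_lin_on S (\<lambda>f. 0)"
  unfolding bdd_lin_on_def by (auto intro: exI[of _ 0])

lemma bdd_lin_diff:
  assumes S: "S \<subseteq> lip0 z" and p: "bdd_lin_on S \<phi>" and q: "bdd_lin_on S \<psi>"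
  shows "bdd_lin_on S (\<lambda>f. \<phi> f - \<psi> f)"
proof -
  obtain C1 where C1: "\<And>f. f \<in> S \<Longrightarrow> \<bar>\<phi> f\<bar> \<le> C1 * lipnorm f" using bdd_lin_boundI[OF S p] by blast
  obtain C2 where C2: "\<And>f. f \<in> S \<Longrightarrow> \<bar>\<psi> f\<bar> \<le> C2 * lipnorm f" using bdd_lin_boundI[OF S q] by blast
  show ?thesis unfolding bdd_lin_on_def
  proof (intro conjI ballI allI exI)
    fix f g a b assume "f \<in> S" "g \<in> S"
    then show "\<phi> (\<lambda>x. a * f x + b * g x) - \<psi> (\<lambda>x. a * f x + b * g x) =
        a * (\<phi> f - \<psi> f) + b * (\<phi> g - \<psi> g)"
      using p q by (simp add: bdd_lin_on_def algebra_simps)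
  next
    fix f assume f: "f \<in> S"
    show "\<bar>\<phi> f - \<psi> f\<bar> \<le> (C1 + C2) * lipnorm f"
      using C1[OF f] C2[OF f] by (simp add: algebra_simps abs_triangle_ineq4 order_trans[OF abs_triangle_ineq4])
  qed
qed

lemma bdd_lin_add:
  assumes S: "S \<subseteq> lip0 z" and p: "bdd_lin_on S \<phi>" and q: "bdd_lin_on S \<psi>"
  shows "bdd_lin_on S (\<lambda>f. \<phi> f + \<psi> f)"
proof -
  obtain C1 where C1: "\<And>f. f \<in> S \<Longrightarrow> \<bar>\<phi> f\<bar> \<le> C1 * lipnorm f" using bdd_lin_boundI[OF S p] by blast
  obtain C2 where C2: "\<And>f. f \<in> S \<Longrightarrow> \<bar>\<psi> f\<bar> \<le> C2 * lipnorm f" using bdd_lin_boundI[OF S q] by blast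
  show ?thesis unfolding bdd_lin_on_def
  proof (intro conjI ballI allI exI)
    fix f g a b assume "f \<in> S" "g \<in> S"
    then show "\<phi> (\<lambda>x. a * f x + b * g x) + \<psi> (\<lambda>x. a * f x + b * g x) =
        a * (\<phi> f + \<psi> f) + b * (\<phi> g + \<psi> g)"
      using p q by (simp add: bdd_lin_on_def algebra_simps)
  next
    fix f assume f: "f \<in> S"
    show "\<bar>\<phi> f + \<psi> f\<bar> \<le> (C1 + C2) * lipnorm f"
      using C1[OF f] C2[OF f] by (simp add: algebra_simps order_trans[OF abs_triangle_ineq])
  qed
qed

lemma bdd_lin_cmult:
  assumes S: "S \<subseteq> lip0 z" and p: "bdd_lin_on S \<phi>"
  shows "bdd_lin_on S (\<lambda>f. c * \<phi> f)"
proof -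
  obtain C1 where C0: "C1 \<ge> 0" and C1: "\<And>f. f \<in> S \<Longrightarrow> \<bar>\<phi> f\<bar> \<le> C1 * lipnorm f" using bdd_lin_boundI[OF S p] by blast
  show ?thesis unfolding bdd_lin_on_def
  proof (intro conjI ballI allI exI)
    fix f g a b assume "f \<in> S" "g \<in> S"
    then show "c * \<phi> (\<lambda>x. a * f x + b * g x) = a * (c * \<phi> f) + b * (c * \<phi> g)"
      using p by (simp add: bdd_lin_on_def algebra_simps)
  next
    fix f assume f: "f \<in> S"
    have "\<bar>c * \<phi> f\<bar> = \<bar>c\<bar> * \<bar>\<phi> f\<bar>" by (simp add: abs_mult)
    also have "\<dots> \<le> \<bar>c\<bar> * (C1 * lipnorm f)" using C1[OF f] by (simp add: mult_left_mono)
    finally show "\<bar>c * \<phi> f\<bar> \<le> (\<bar>c\<bar> * C1) * lipnorm f" by simp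
  qed
qed

lemma bdd_lin_sum: "bdd_lin_on (lip0 z) (\<lambda>f. \<Sum>i<(n::nat). a i * dirac z (p i) f)"
proof (induction n)
  case 0 then show ?case by (simp add: bdd_lin_zero)
next
  case (Suc n)
  have "bdd_lin_on (lip0 z) (\<lambda>f. (\<Sum>i<n. a i * dirac z (p i) f) + a n * dirac z (p n) f)"
    by (rule bdd_lin_add[OF _ Suc bdd_lin_cmult[OF _ bdd_lin_dirac]]) auto
  then show ?case by simp
qed

lemma dnorm_bdd:
  assumes S: "S \<subseteq> lip0 z" and p: "bdd_lin_on S \<phi>"
  shows "bdd_above {\<bar>\<phi> f\<bar> | f. f \<in> S \<and> lipnorm f \<le> 1}"
proof -
  obtain C where C0: "C \<ge> 0" and C: "\<And>f. f \<in> S \<Longrightarrow> \<bar>\<phi> f\<bar> \<le> C * lipnorm f" using bdd_lin_boundI[OF S p] by blast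
  show ?thesis
  proof (rule bdd_aboveI[of _ C], clarify)
    fix f assume "f \<in> S" "lipnorm f \<le> 1"
    then show "\<bar>\<phi> f\<bar> \<le> C" using C[of f] C0 mult_left_mono[of "lipnorm f" 1 C] by simp
  qed
qed

lemma dnorm_upper:
  assumes S: "S \<subseteq> lip0 z" and p: "bdd_lin_on S \<phi>" and "f \<in> S" "lipnorm f \<le> 1"
  shows "\<bar>\<phi> f\<bar> \<le> dnorm_on S \<phi>"
  unfolding dnorm_on_def by (rule cSup_upper[OF _ dnorm_bdd[OF S p]]) (use assms in auto)

lemma dnorm_diff:
  assumes S: "S \<subseteq> lip0 z" and ne: "(\<lambda>x. 0) \<in> S" and p: "bdd_lin_on S \<phi>" and q: "bdd_lin_on S \<psi>"
  shows "dnorm_on S (\<lambda>f. \<phi> f - \<psi> f) \<le> dnorm_on S \<phi> + dnorm_on S \<psi>"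
  unfolding dnorm_on_def[of S "\<lambda>f. \<phi> f - \<psi> f"]
proof (rule cSup_least)
  show "{\<bar>\<phi> f - \<psi> f\<bar> |f. f \<in> S \<and> lipnorm f \<le> 1} \<noteq> {}"
  proof -
    show ?thesis using ne lz1 by blast
  qed
next
  fix y assume "y \<in> {\<bar>\<phi> f - \<psi> f\<bar> |f. f \<in> S \<and> lipnorm f \<le> 1}"
  then obtain f where f: "f \<in> S" "lipnorm f \<le> 1" and y: "y = \<bar>\<phi> f - \<psi> f\<bar>" by auto
  show "y \<le> dnorm_on S \<phi> + dnorm_on S \<psi>"
    using dnorm_upper[OF S p f] dnorm_upper[OF S q f] y abs_triangle_ineq4[of "\<phi> f" "\<psi> f"] by linarith
qed

lemma dnorm_zero:
  assumes ne: "(\<lambda>x. 0) \<in> S"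
  shows "dnorm_on S (\<lambda>f. 0) = 0"
proof -
  have "{\<bar>0::real\<bar> |f. f \<in> S \<and> lipnorm f \<le> 1} = {0}" using ne lz1 by auto
  then show ?thesis by (simp add: dnorm_on_def)
qed

lemma dirac_free: "dirac z x \<in> free_space z"
  unfolding free_space_def lipdual_def
proof (intro CollectI conjI allI impI bdd_lin_dirac)
  fix f :: "'a \<Rightarrow> real" assume "f \<notin> lip0 z" then show "dirac z x f = 0" by (simp add: dirac_def)
next
  fix e :: real assume e: "e > 0"
  have "(\<lambda>f. dirac z x f - (\<Sum>i<(1::nat). (\<lambda>_. 1) i * dirac z ((\<lambda>_. x) i) f)) = (\<lambda>f. 0)" by simp
  then have D: "dnorm_on (lip0 z) (\<lambda>f. dirac z x f - (\<Sum>i<(1::nat). (\<lambda>_. 1) i * dirac z ((\<lambda>_. x) i) f)) < e"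
    using dnorm_zero[OF lip0_zero[of z]] e by simp
  show "\<exists>(n::nat) (a::nat \<Rightarrow> real) (p::nat \<Rightarrow> 'a).
       dnorm_on (lip0 z) (\<lambda>f. dirac z x f - (\<Sum>i<n. a i * dirac z (p i) f)) < e"
    by (rule exI[of _ 1], rule exI[of _ "\<lambda>_. 1"], rule exI[of _ "\<lambda>_. x"]) (use D in simp)
qed

lemma sum_concat:
  "(\<Sum>i<n1+(n2::nat). (if i < n1 then a i else - b (i - n1)) * dirac z (if i < n1 then p i else q (i - n1)) f)
   = (\<Sum>i<n1. a i * dirac z (p i) f) - (\<Sum>i<n2. b i * dirac z (q i) f)"
  by (induction n2) auto



lemma free_bdd: "\<mu> \<in> free_space z \<Longrightarrow> bdd_lin_on (lip0 z) \<mu>"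
  by (simp add: free_space_def lipdual_def)

lemma free_out: "\<mu> \<in> free_space z \<Longrightarrow> f \<notin> lip0 z \<Longrightarrow> \<mu> f = 0"
  by (simp add: free_space_def lipdual_def)

lemma free_approx:
  assumes "\<mu> \<in> free_space z" "e > 0"
  obtains n a p where "dnorm_on (lip0 z) (\<lambda>f. \<mu> f - (\<Sum>i<(n::nat). a i * dirac z (p i) f)) < e"
  using assms unfolding free_space_def by blast

lemma free_diff:
  assumes m: "\<mu> \<in> free_space z" and n: "\<nu> \<in> free_space z"
  shows "(\<lambda>f. \<mu> f - \<nu> f) \<in> free_space z"
  unfolding free_space_def lipdual_def
proof (intro CollectI conjI allI impI)
  show "bdd_lin_on (lip0 z) (\<lambda>f. \<mu> f - \<nu> f)"
    by (rule bdd_lin_diff[of "lip0 z" z, OF subset_refl free_bdd[OF m] free_bdd[OF n]])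
next
  fix f assume "f \<notin> lip0 z" then show "\<mu> f - \<nu> f = 0" using free_out[OF m] free_out[OF n] by simp
next
  fix e :: real assume e: "e > 0"
  obtain n1 a p where A: "dnorm_on (lip0 z) (\<lambda>f. \<mu> f - (\<Sum>i<(n1::nat). a i * dirac z (p i) f)) < e/2"
    using free_approx[OF m half_gt_zero[OF e]] by blast
  obtain n2 b q where B: "dnorm_on (lip0 z) (\<lambda>f. \<nu> f - (\<Sum>i<(n2::nat). b i * dirac z (q i) f)) < e/2"
    using free_approx[OF n half_gt_zero[OF e]] by blast
  define c where "c = (\<lambda>i. if i < n1 then a i else - b (i - n1))"
  define r where "r = (\<lambda>i. if i < n1 then p i else q (i - n1))"
  have eq: "(\<lambda>f. \<mu> f - \<nu> f - (\<Sum>i<n1+n2. c i * dirac z (r i) f)) =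
     (\<lambda>f. (\<mu> f - (\<Sum>i<n1. a i * dirac z (p i) f)) - (\<nu> f - (\<Sum>i<n2. b i * dirac z (q i) f)))"
    unfolding c_def r_def sum_concat by (simp add: algebra_simps)
  have "dnorm_on (lip0 z) (\<lambda>f. (\<mu> f - (\<Sum>i<n1. a i * dirac z (p i) f)) - (\<nu> f - (\<Sum>i<n2. b i * dirac z (q i) f)))
      \<le> dnorm_on (lip0 z) (\<lambda>f. \<mu> f - (\<Sum>i<(n1::nat). a i * dirac z (p i) f))
        + dnorm_on (lip0 z) (\<lambda>f. \<nu> f - (\<Sum>i<(n2::nat). b i * dirac z (q i) f))"
    by (rule dnorm_diff[OF _ lip0_zero bdd_lin_diff[OF _ free_bdd[OF m] bdd_lin_sum]
          bdd_lin_diff[OF _ free_bdd[OF n] bdd_lin_sum]]) auto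
  then have "dnorm_on (lip0 z) (\<lambda>f. \<mu> f - \<nu> f - (\<Sum>i<n1+n2. c i * dirac z (r i) f)) < e"
    using A B unfolding eq by linarith
  then show "\<exists>(n::nat) (a::nat \<Rightarrow> real) (p::nat \<Rightarrow> 'a).
       dnorm_on (lip0 z) (\<lambda>f. \<mu> f - \<nu> f - (\<Sum>i<n. a i * dirac z (p i) f)) < e" by blast
qed

lemma separation:
  assumes P: "isometric_predual z X" and m: "\<mu> \<in> free_space z" and n: "\<nu> \<in> free_space z"
    and eqX: "\<forall>f\<in>X. \<mu> f = \<nu> f"
  shows "\<mu> = \<nu>"
proof -
  define \<rho> where "\<rho> = (\<lambda>f. \<mu> f - \<nu> f)"
  have r: "\<rho> \<in> free_space z" unfolding \<rho>_def by (rule free_diff[OF m n])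
  have X0: "(\<lambda>x. 0) \<in> X" and XL: "X \<subseteq> lip0 z" using P by (auto simp: isometric_predual_def)
  have "{\<bar>\<rho> f\<bar> |f. f \<in> X \<and> lipnorm f \<le> 1} = {0}"
  proof
    show "{\<bar>\<rho> f\<bar> |f. f \<in> X \<and> lipnorm f \<le> 1} \<subseteq> {0}" using eqX unfolding \<rho>_def by auto
    have "\<bar>\<rho> (\<lambda>x. 0)\<bar> = 0" using X0 eqX unfolding \<rho>_def by auto
    then show "{0} \<subseteq> {\<bar>\<rho> f\<bar> |f. f \<in> X \<and> lipnorm f \<le> 1}" using X0 lz1 by force
  qed
  then have "dnorm_on X \<rho> = 0" by (simp add: dnorm_on_def)
  then have d0: "dnorm_on (lip0 z) \<rho> = 0" using P r by (simp add: isometric_predual_def)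
  have rb: "bdd_lin_on (lip0 z) \<rho>" using free_bdd[OF r] .
  have "\<rho> f = 0" for f
  proof (cases "f \<in> lip0 z")
    case False then show ?thesis using free_out[OF r] by simp
  next
    case True
    define c where "c = 1 / (lipnorm f + 1)"
    have ln: "lipnorm f \<ge> 0" using lip0_lipnorm(2)[OF True] .
    have c0: "c > 0" using ln by (simp add: c_def)
    have "lipnorm (\<lambda>x. c * f x) \<le> \<bar>c\<bar> * lipnorm f" by (rule lipnorm_cmult[OF True])
    also have "\<dots> \<le> 1" using ln c0 by (simp add: c_def field_simps)
    finally have "\<bar>\<rho> (\<lambda>x. c * f x)\<bar> \<le> 0"
      using dnorm_upper[of "lip0 z" z, OF subset_refl rb lip0_cmult[OF True]] d0 by simp
    moreover have "\<rho> (\<lambda>x. c * f x + 0 * f x) = c * \<rho> f + 0 * \<rho> f"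
      using rb True unfolding bdd_lin_on_def by blast
    ultimately show ?thesis using c0 by simp
  qed
  then show ?thesis unfolding \<rho>_def by (auto simp: fun_eq_iff)
qed



lemma FB:
  assumes "generate_topology_on {{\<mu>. \<mu> f \<in> U} | f U. f \<in> X \<and> open U} Q" "\<mu> \<in> Q"
  shows "\<exists>F. finite F \<and> (\<forall>p\<in>F. fst p \<in> X \<and> open (snd p) \<and> \<mu> (fst p) \<in> snd p) \<and> {\<nu>. \<forall>p\<in>F. \<nu> (fst p) \<in> snd p} \<subseteq> Q"
  using assms
proof (induction arbitrary: \<mu> rule: generate_topology_on.induct)
  case Empty then show ?case by simp
next
  case (Int a b)
  obtain F1 where F1: "finite F1" "\<forall>p\<in>F1. fst p \<in> X \<and> open (snd p) \<and> \<mu> (fst p) \<in> snd p" "{\<nu>. \<forall>p\<in>F1. \<nu> (fst p) \<in> snd p} \<subseteq> a"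
    using Int.IH(1)[of \<mu>] Int.prems by blast
  obtain F2 where F2: "finite F2" "\<forall>p\<in>F2. fst p \<in> X \<and> open (snd p) \<and> \<mu> (fst p) \<in> snd p" "{\<nu>. \<forall>p\<in>F2. \<nu> (fst p) \<in> snd p} \<subseteq> b"
    using Int.IH(2)[of \<mu>] Int.prems by blast
  have "{\<nu>. \<forall>p\<in>F1 \<union> F2. \<nu> (fst p) \<in> snd p} \<subseteq> a \<inter> b" using F1(3) F2(3) by auto
  then show ?case
    by (intro exI[of _ "F1 \<union> F2"] conjI) (use F1(1,2) F2(1,2) in auto)
next
  case (UN K)
  obtain k where k: "k \<in> K" "\<mu> \<in> k" using UN.prems by (metis UnionE)
  obtain F where "finite F" "\<forall>p\<in>F. fst p \<in> X \<and> open (snd p) \<and> \<mu> (fst p) \<in> snd p" "{\<nu>. \<forall>p\<in>F. \<nu> (fst p) \<in> snd p} \<subseteq> k"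
    using UN.IH[OF k] by blast
  then show ?case by (intro exI[of _ F]) (use k(1) in blast)
next
  case (Basis s)
  obtain f U where s: "s = {\<mu>. \<mu> f \<in> U}" "f \<in> X" "open U" using Basis.hyps by blast
  show ?case by (rule exI[of _ "{(f,U)}"]) (use s(2,3) Basis.prems in \<open>simp add: s(1)\<close>)
qed

lemma weak_top_space:
  assumes "(\<lambda>x. 0) \<in> X"
  shows "topspace (weak_top z X) = free_space z"
proof -
  have "UNIV \<in> {{\<mu>. \<mu> f \<in> U} | f U. f \<in> X \<and> open U}"
    using assms by (auto intro!: exI[of _ "\<lambda>x. 0"] exI[of _ UNIV])
  then have u: "\<Union>{{\<mu>. \<mu> f \<in> U} | f U. f \<in> X \<and> open U} = (UNIV :: (('a::metric_space \<Rightarrow> real) \<Rightarrow> real) set)"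
    by blast
  have "topspace (topology_generated_by {{\<mu>. \<mu> f \<in> U} | f U. f \<in> X \<and> open U}) = (UNIV :: (('a::metric_space \<Rightarrow> real) \<Rightarrow> real) set)"
    by (simp only: topology_generated_by_topspace u)
  then show ?thesis unfolding weak_top_def by (simp only: topspace_subtopology) simp
qed

lemma weak_open_basic:
  assumes "f \<in> X" "open U"
  shows "openin (weak_top z X) ({\<mu>. \<mu> f \<in> U} \<inter> free_space z)"
proof -
  have "openin (topology_generated_by {{\<mu>. \<mu> f \<in> U} | f U. f \<in> X \<and> open U}) {\<mu>. \<mu> f \<in> U}"
    by (rule topology_generated_by_Basis) (use assms in blast)
  then show ?thesis unfolding weak_top_def openin_subtopology by blast
qed

lemma weak_open_FB:
  assumes "openin (weak_top z X) W" "\<mu> \<in> W"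
  shows "\<exists>F. finite F \<and> (\<forall>p\<in>F. fst p \<in> X \<and> open (snd p) \<and> \<mu> (fst p) \<in> snd p) \<and>
     {\<nu>. \<forall>p\<in>F. \<nu> (fst p) \<in> snd p} \<inter> free_space z \<subseteq> W"
proof -
  obtain Q where Q: "generate_topology_on {{\<mu>. \<mu> f \<in> U} | f U. f \<in> X \<and> open U} Q" "W = Q \<inter> free_space z"
    using assms(1) unfolding weak_top_def openin_subtopology openin_topology_generated_by_iff by blast
  have mu: "\<mu> \<in> Q" using assms(2) Q(2) by simp
  obtain F where F: "finite F \<and> (\<forall>p\<in>F. fst p \<in> X \<and> open (snd p) \<and> \<mu> (fst p) \<in> snd p) \<and>
     {\<nu>. \<forall>p\<in>F. \<nu> (fst p) \<in> snd p} \<subseteq> Q" using FB[OF Q(1) mu] by (rule exE)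
  have "{\<nu>. \<forall>p\<in>F. \<nu> (fst p) \<in> snd p} \<inter> free_space z \<subseteq> W"
    using F unfolding Q(2) by (rule conjE) (rule Int_mono, simp_all)
  then show ?thesis using F by (intro exI[of _ F]) simp
qed

lemma weak_Hausdorff:
  assumes P: "isometric_predual z X"
  shows "Hausdorff_space (weak_top z X)"
proof -
  have X0: "(\<lambda>x. 0) \<in> X" using P by (simp add: isometric_predual_def)
  show ?thesis unfolding Hausdorff_space_def
  proof (intro allI impI)
    fix \<mu> \<nu> assume H: "\<mu> \<in> topspace (weak_top z X) \<and> \<nu> \<in> topspace (weak_top z X) \<and> \<mu> \<noteq> \<nu>"
    then have m: "\<mu> \<in> free_space z" and n: "\<nu> \<in> free_space z" using weak_top_space[OF X0] by auto
    obtain f where f: "f \<in> X" "\<mu> f \<noteq> \<nu> f" using separation[OF P m n] H by blast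
    obtain U V where UV: "open U" "open V" "\<mu> f \<in> U" "\<nu> f \<in> V" "U \<inter> V = {}"
      using separation_t2[THEN iffD1, OF f(2)] by blast
    show "\<exists>U V. openin (weak_top z X) U \<and> openin (weak_top z X) V \<and> \<mu> \<in> U \<and> \<nu> \<in> V \<and> disjnt U V"
    proof (intro exI conjI)
      show "openin (weak_top z X) ({\<mu>. \<mu> f \<in> U} \<inter> free_space z)" by (rule weak_open_basic[OF f(1) UV(1)])
      show "openin (weak_top z X) ({\<mu>. \<mu> f \<in> V} \<inter> free_space z)" by (rule weak_open_basic[OF f(1) UV(2)])
      show "\<mu> \<in> {\<mu>. \<mu> f \<in> U} \<inter> free_space z" using UV(3) m by simp
      show "\<nu> \<in> {\<mu>. \<mu> f \<in> V} \<inter> free_space z" using UV(4) n by simp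
      show "disjnt ({\<mu>. \<mu> f \<in> U} \<inter> free_space z) ({\<mu>. \<mu> f \<in> V} \<inter> free_space z)"
        using UV(5) unfolding disjnt_def by blast
    qed
  qed
qed

lemma dirac_X: "X \<subseteq> lip0 z \<Longrightarrow> f \<in> X \<Longrightarrow> dirac z x f = f x"
  by (auto simp: dirac_def)

lemma dirac_inj:
  assumes "x \<noteq> y"
  shows "dirac z x \<noteq> dirac z y"
proof -
  define g where "g = (\<lambda>t. dist t x - dist z x)"
  have "1-lipschitz_on UNIV g"
  proof (rule lipschitz_onI)
    fix s t :: 'a
    have "\<bar>dist s x - dist x t\<bar> \<le> dist s t" by (rule abs_dist_diff_le)
    then show "dist (g s) (g t) \<le> 1 * dist s t" by (simp add: g_def dist_real_def dist_commute)
  qed simp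
  then have g: "g \<in> lip0 z" by (auto simp: lip0_def g_def)
  have "dist y x > 0" using assms by simp
  then have "dirac z x g \<noteq> dirac z y g" using g by (simp add: dirac_def g_def)
  then show ?thesis by metis
qed

lemma X_sep_points:
  assumes P: "isometric_predual z X" and xy: "x \<noteq> y"
  shows "\<exists>f\<in>X. f x \<noteq> f y"
proof (rule ccontr)
  assume "\<not> ?thesis"
  then have H: "\<forall>f\<in>X. f x = f y" by blast
  have XL: "X \<subseteq> lip0 z" using P by (simp add: isometric_predual_def)
  have "\<forall>f\<in>X. dirac z x f = dirac z y f"
    using H dirac_X[OF XL] by simp
  then have "dirac z x = dirac z y" by (rule separation[OF P dirac_free dirac_free])
  then show False using dirac_inj[OF xy] by simp
qed



lemma dir1:
  fixes z :: "'a::metric_space" and X :: "('a \<Rightarrow> real) set"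
  assumes P: "isometric_predual z X"
    and T: "topspace T = UNIV" "compact_space T" "\<forall>f\<in>X. continuous_map T euclideanreal f"
  shows "closedin (weak_top z X) (range (dirac z))"
proof -
  have XL: "X \<subseteq> lip0 z" and X0: "(\<lambda>x. 0) \<in> X" using P by (auto simp: isometric_predual_def)
  have cont: "continuous_map T (weak_top z X) (dirac z)"
    unfolding continuous_map_def
  proof (intro conjI allI impI)
    show "dirac z \<in> topspace T \<rightarrow> topspace (weak_top z X)"
      using weak_top_space[OF X0] dirac_free by auto
  next
    fix W assume W: "openin (weak_top z X) W"
    show "openin T {x \<in> topspace T. dirac z x \<in> W}"
    proof (subst openin_subopen, intro ballI)
      fix x assume x: "x \<in> {x \<in> topspace T. dirac z x \<in> W}"
      obtain F where F: "finite F \<and> (\<forall>p\<in>F. fst p \<in> X \<and> open (snd p) \<and> dirac z x (fst p) \<in> snd p) \<and>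
        {\<nu>. \<forall>p\<in>F. \<nu> (fst p) \<in> snd p} \<inter> free_space z \<subseteq> W"
        using weak_open_FB[OF W, of "dirac z x"] x by blast
      define V where "V = (\<Inter>p\<in>F. {y \<in> topspace T. fst p y \<in> snd p}) \<inter> topspace T"
      have "openin T V" unfolding V_def
      proof (rule openin_INT)
        show "finite F" using F by blast
        fix p assume p: "p \<in> F"
        then have "continuous_map T euclideanreal (fst p)" "open (snd p)" using F T(3) by auto
        then show "openin T {y \<in> topspace T. fst p y \<in> snd p}"
          by (simp add: openin_continuous_map_preimage)
      qed
      moreover have "x \<in> V"
      proof -
        have "\<forall>p\<in>F. fst p x \<in> snd p" using F dirac_X[OF XL] by metis
        then show ?thesis unfolding V_def using T(1) by auto
      qed
      moreover have "V \<subseteq> {x \<in> topspace T. dirac z x \<in> W}"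
      proof
        fix y assume y: "y \<in> V"
        have "\<forall>p\<in>F. dirac z y (fst p) \<in> snd p" using y F dirac_X[OF XL] unfolding V_def by auto
        then have "dirac z y \<in> {\<nu>. \<forall>p\<in>F. \<nu> (fst p) \<in> snd p} \<inter> free_space z" using dirac_free by auto
        then show "y \<in> {x \<in> topspace T. dirac z x \<in> W}" using F T(1) by auto
      qed
      ultimately show "\<exists>V. openin T V \<and> x \<in> V \<and> V \<subseteq> {x \<in> topspace T. dirac z x \<in> W}" by blast
    qed
  qed
  have "compactin (weak_top z X) (dirac z ` topspace T)"
    using image_compactin[OF _ cont] T(2) by (simp add: compact_space_def)
  then have "compactin (weak_top z X) (range (dirac z))" using T(1) by simp
  then show ?thesis by (rule compactin_imp_closedin[OF weak_Hausdorff[OF P]])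
qed



lemma pullback_compact:
  fixes E :: "'a \<Rightarrow> 'b" and R :: "'b topology"
  assumes cE: "compactin R (range E)" and tT: "topspace T = UNIV" and T_def: "T = pullback_topology UNIV E R"
  shows "compact_space T"
    unfolding compact_space_def compactin_def
  proof (intro conjI allI impI)
    show "topspace T \<subseteq> topspace T" by simp
    fix \<U> assume U: "(\<forall>B\<in>\<U>. openin T B) \<and> topspace T \<subseteq> \<Union>\<U>"
    have ex: "\<forall>B\<in>\<U>. \<exists>O'. openin R O' \<and> B = E -` O' \<inter> UNIV"
    proof
      fix B assume "B \<in> \<U>"
      then have "openin T B" using conjunct1[OF U] by simp
      then show "\<exists>O'. openin R O' \<and> B = E -` O' \<inter> UNIV" unfolding T_def openin_pullback_topology .
    qed
    define G where "G = (\<lambda>B. SOME O'. openin R O' \<and> B = E -` O' \<inter> UNIV)"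
    have G: "\<forall>B\<in>\<U>. openin R (G B) \<and> B = E -` (G B) \<inter> UNIV"
    proof
      fix B assume B: "B \<in> \<U>"
      have "\<exists>O'. openin R O' \<and> B = E -` O' \<inter> UNIV" using ex B by (rule bspec)
      then show "openin R (G B) \<and> B = E -` (G B) \<inter> UNIV" unfolding G_def by (rule someI_ex)
    qed
    have cov: "range E \<subseteq> \<Union>(G ` \<U>)"
    proof (rule subsetI)
      fix y assume "y \<in> range E"
      then obtain x where x: "y = E x" by (rule rangeE)
      have "x \<in> \<Union>\<U>" using conjunct2[OF U] tT by auto
      then obtain B where B: "B \<in> \<U>" "x \<in> B" by (rule UnionE)
      have "B = E -` (G B) \<inter> UNIV" using G B(1) by simp
      then have "E x \<in> G B" using B(2) by auto
      then show "y \<in> \<Union>(G ` \<U>)" using B(1) x by (intro UnionI[of "G B"]) auto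
    qed
    have opG: "\<forall>B'\<in>G ` \<U>. openin R B'" using G by simp
    have "\<exists>F'. finite F' \<and> F' \<subseteq> G ` \<U> \<and> range E \<subseteq> \<Union>F'"
      using conjunct2[OF cE[unfolded compactin_def], rule_format, of "G ` \<U>"] opG cov by simp
    then obtain F' where F': "finite F'" "F' \<subseteq> G ` \<U>" "range E \<subseteq> \<Union>F'" by (elim exE conjE)
    obtain F where F: "F \<subseteq> \<U>" "finite F" "F' = G ` F"
      using finite_subset_image[OF F'(1,2)] by (elim exE conjE)
    have "topspace T \<subseteq> \<Union>F"
    proof (rule subsetI)
      fix x assume "x \<in> topspace T"
      have "E x \<in> \<Union>F'" using F'(3) by (rule subsetD) simp
      then obtain B' where B': "B' \<in> F'" "E x \<in> B'" by (rule UnionE)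
      then obtain B where B: "B \<in> F" "B' = G B" using F(3) by (auto simp: image_iff)
      have BU: "B \<in> \<U>" using F(1) B(1) by (rule subsetD)
      have "B = E -` (G B) \<inter> UNIV" using G BU by simp
      then have "x \<in> B" using B'(2) B(2) by auto
      then show "x \<in> \<Union>F" using B(1) by (rule UnionI[rotated])
    qed
    then show "\<exists>\<F>. finite \<F> \<and> \<F> \<subseteq> \<U> \<and> topspace T \<subseteq> \<Union>\<F>" using F(1,2) by (intro exI[of _ F]) simp
  qed


lemma dir2:
  fixes z :: "'a::metric_space" and X :: "('a \<Rightarrow> real) set"
  assumes B: "bounded (UNIV :: 'a set)" and P: "isometric_predual z X"
    and cl: "closedin (weak_top z X) (range (dirac z))"
  shows "\<exists>T :: 'a topology. topspace T = UNIV \<and> compact_space T \<and> Hausdorff_space T \<and>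
            (\<forall>f\<in>X. continuous_map T euclideanreal f)"
proof -
  have XL: "X \<subseteq> lip0 z" and X0: "(\<lambda>x. 0) \<in> X"
    and Xlin: "\<forall>f\<in>X. \<forall>g\<in>X. \<forall>a b. (\<lambda>x. a * f x + b * g x) \<in> X"
    and surj: "\<forall>\<phi>. bdd_lin_on X \<phi> \<longrightarrow> (\<exists>\<mu>\<in>free_space z. \<forall>f\<in>X. \<mu> f = \<phi> f)"
    using P by (auto simp: isometric_predual_def)
  obtain d where d: "\<forall>y\<in>UNIV. dist z y \<le> d" using B bounded_any_center[of UNIV z] by blast
  define E where "E = (\<lambda>x::'a. restrict (\<lambda>f. f x) X)"
  define R where "R = product_topology (\<lambda>_::('a \<Rightarrow> real). euclideanreal) X"
  define T where "T = pullback_topology UNIV E R"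
  have tR: "topspace R = (\<Pi>\<^sub>E f\<in>X. UNIV)" unfolding R_def by simp
  have EtR: "E x \<in> topspace R" for x unfolding tR E_def by simp
  have tT: "topspace T = UNIV" unfolding T_def topspace_pullback_topology using EtR by auto
  have EX: "f \<in> X \<Longrightarrow> E x f = f x" for f x by (simp add: E_def)
  have pc: "f \<in> X \<Longrightarrow> continuous_map R euclideanreal (\<lambda>\<psi>. \<psi> f)" for f
    unfolding R_def by (rule continuous_map_product_projection)
  have contf: "continuous_map T euclideanreal f" if f: "f \<in> X" for f
  proof -
    have "continuous_map T euclideanreal ((\<lambda>\<psi>. \<psi> f) \<circ> E)"
      unfolding T_def by (rule continuous_map_pullback[OF pc[OF f]])
    moreover have "(\<lambda>\<psi>. \<psi> f) \<circ> E = f" using f by (auto simp: E_def)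
    ultimately show ?thesis by simp
  qed
  have haus: "Hausdorff_space T"
    unfolding Hausdorff_space_def
  proof (intro allI impI)
    fix x y assume "x \<in> topspace T \<and> y \<in> topspace T \<and> x \<noteq> y"
    then have xy: "x \<noteq> y" by blast
    obtain f where f: "f \<in> X" "f x \<noteq> f y" using X_sep_points[OF P xy] by blast
    obtain U V where UV: "open U" "open V" "f x \<in> U" "f y \<in> V" "U \<inter> V = {}"
      using separation_t2[THEN iffD1, OF f(2)] by blast
    show "\<exists>U V. openin T U \<and> openin T V \<and> x \<in> U \<and> y \<in> V \<and> disjnt U V"
    proof (intro exI conjI)
      show "openin T {x \<in> topspace T. f x \<in> U}" using openin_continuous_map_preimage[OF contf[OF f(1)]] UV(1) by simp
      show "openin T {x \<in> topspace T. f x \<in> V}" using openin_continuous_map_preimage[OF contf[OF f(1)]] UV(2) by simp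
      show "x \<in> {x \<in> topspace T. f x \<in> U}" using UV(3) tT by simp
      show "y \<in> {x \<in> topspace T. f x \<in> V}" using UV(4) tT by simp
      show "disjnt {x \<in> topspace T. f x \<in> U} {x \<in> topspace T. f x \<in> V}"
        using UV(5) unfolding disjnt_def by blast
    qed
  qed
  define K where "K = (\<Pi>\<^sub>E f\<in>X. cball (0::real) (d * lipnorm f))"
  have cK: "compactin R K" unfolding K_def R_def by (simp add: compactin_PiE)
  have EK: "range E \<subseteq> K"
  proof clarify
    fix x
    show "E x \<in> K" unfolding K_def
      unfolding E_def
    proof (rule restrict_PiE_iff[THEN iffD2], intro ballI)
      fix f assume f: "f \<in> X"
      then have fl: "f \<in> lip0 z" using XL by blast
      have "\<bar>f x\<bar> \<le> lipnorm f * dist x z" by (rule lip0_bound[OF fl])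
      also have "\<dots> \<le> lipnorm f * d" using d lip0_lipnorm(2)[OF fl]
        by (simp add: mult_left_mono dist_commute)
      finally show "f x \<in> cball 0 (d * lipnorm f)" by (simp add: mult.commute)
    qed
  qed
  have sub: "range E \<subseteq> topspace R" using EtR by auto
  have clE: "closedin R (range E)"
  proof -
    have "openin R (topspace R - range E)"
    proof (subst openin_subopen, intro ballI)
      fix \<phi> assume \<phi>: "\<phi> \<in> topspace R - range E"
      show "\<exists>V. openin R V \<and> \<phi> \<in> V \<and> V \<subseteq> topspace R - range E"
      proof (rule ccontr)
        assume nV: "\<not> (\<exists>V. openin R V \<and> \<phi> \<in> V \<and> V \<subseteq> topspace R - range E)"
        have meet: "\<exists>x. E x \<in> V" if "openin R V" "\<phi> \<in> V" for V
        proof (rule ccontr)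
          assume "\<nexists>x. E x \<in> V"
          then have "V \<subseteq> topspace R - range E" using openin_subset[OF that(1)] by auto
          then show False using nV that by blast
        qed
        have proj: "\<exists>x. g (E x) \<in> W" if "continuous_map R euclideanreal g" "open W" "g \<phi> \<in> W" for g W
        proof -
          have "openin R {\<psi> \<in> topspace R. g \<psi> \<in> W}"
            using openin_continuous_map_preimage[OF that(1)] that(2) by simp
          moreover have "\<phi> \<in> {\<psi> \<in> topspace R. g \<psi> \<in> W}" using \<phi> that(3) by simp
          ultimately obtain x where "E x \<in> {\<psi> \<in> topspace R. g \<psi> \<in> W}" using meet by blast
          then show ?thesis by blast
        qed
        have bnd: "\<bar>\<phi> f\<bar> \<le> d * lipnorm f" if f: "f \<in> X" for f
        proof (rule ccontr)
          assume "\<not> ?thesis"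
          then have "\<bar>\<phi> f\<bar> \<in> {d * lipnorm f<..}" by simp
          then obtain x where "\<bar>E x f\<bar> \<in> {d * lipnorm f<..}"
            using proj[of "\<lambda>\<psi>. \<bar>\<psi> f\<bar>" "{d * lipnorm f<..}"] continuous_map_real_abs[OF pc[OF f]] by auto
          moreover have "E x \<in> K" using EK by blast
          ultimately show False using f unfolding K_def by (auto simp: PiE_iff)
        qed
        have lin: "\<phi> (\<lambda>x. a * f x + b * g x) = a * \<phi> f + b * \<phi> g" if f: "f \<in> X" and g: "g \<in> X" for f g a b
        proof (rule ccontr)
          define h where "h = (\<lambda>x. a * f x + b * g x)"
          have h: "h \<in> X" using Xlin f g unfolding h_def by blast
          assume "\<not> ?thesis"
          then have "\<phi> h - (a * \<phi> f + b * \<phi> g) \<in> - {0}" unfolding h_def by simp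
          moreover have "continuous_map R euclideanreal (\<lambda>\<psi>. \<psi> h - (a * \<psi> f + b * \<psi> g))"
            by (intro continuous_map_diff continuous_map_add continuous_map_real_mult_left pc h f g)
          ultimately obtain x where "E x h - (a * E x f + b * E x g) \<in> - {0}"
            using proj[of "\<lambda>\<psi>. \<psi> h - (a * \<psi> f + b * \<psi> g)" "- {0}"] by (auto simp: open_Compl)
          then show False using EX f g h unfolding h_def by simp
        qed
        have "bdd_lin_on X \<phi>" unfolding bdd_lin_on_def
          using lin bnd by blast
        then obtain \<mu> where \<mu>: "\<mu> \<in> free_space z" "\<forall>f\<in>X. \<mu> f = \<phi> f" using surj by blast
        have nd: "\<mu> \<notin> range (dirac z)"
        proof
          assume "\<mu> \<in> range (dirac z)"
          then obtain x where x: "\<mu> = dirac z x" by blast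
          have "\<phi> = E x"
          proof (rule PiE_ext)
            show "\<phi> \<in> (\<Pi>\<^sub>E f\<in>X. UNIV)" using \<phi> tR by simp
            show "E x \<in> (\<Pi>\<^sub>E f\<in>X. UNIV)" using EtR tR by simp
            fix f assume f: "f \<in> X"
            have "\<phi> f = dirac z x f" using \<mu>(2) f x by simp
            then show "\<phi> f = E x f" using dirac_X[OF XL f] EX[OF f] by simp
          qed
          then show False using \<phi> by simp
        qed
        have op: "openin (weak_top z X) (free_space z - range (dirac z))"
          using cl unfolding closedin_def weak_top_space[OF X0] by simp
        obtain F where F: "finite F \<and> (\<forall>p\<in>F. fst p \<in> X \<and> open (snd p) \<and> \<mu> (fst p) \<in> snd p) \<and>
          {\<nu>. \<forall>p\<in>F. \<nu> (fst p) \<in> snd p} \<inter> free_space z \<subseteq> free_space z - range (dirac z)"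
          using weak_open_FB[OF op, of \<mu>] \<mu>(1) nd by blast
        define V where "V = (\<Inter>p\<in>F. {\<psi> \<in> topspace R. \<psi> (fst p) \<in> snd p}) \<inter> topspace R"
        have "openin R V" unfolding V_def
        proof (rule openin_INT)
          show "finite F" using F by blast
          fix p assume p: "p \<in> F"
          then have "fst p \<in> X" "open (snd p)" using F by auto
          then show "openin R {\<psi> \<in> topspace R. \<psi> (fst p) \<in> snd p}"
            using openin_continuous_map_preimage[OF pc] by simp
        qed
        moreover have "\<phi> \<in> V"
        proof -
          have "\<forall>p\<in>F. \<phi> (fst p) \<in> snd p" using F \<mu>(2) by metis
          then show ?thesis unfolding V_def using \<phi> by auto
        qed
        ultimately obtain x where x: "E x \<in> V" using meet by blast
        have "\<forall>p\<in>F. dirac z x (fst p) \<in> snd p"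
          using x F EX dirac_X[OF XL] unfolding V_def by auto
        then have "dirac z x \<in> {\<nu>. \<forall>p\<in>F. \<nu> (fst p) \<in> snd p} \<inter> free_space z" using dirac_free by auto
        then have "dirac z x \<in> free_space z - range (dirac z)" using F by blast
        then show False by blast
      qed
    qed
    then show ?thesis using sub by (simp add: closedin_def)
  qed
  have cE: "compactin R (range E)" by (rule closed_compactin[OF cK EK clE])
  have comp: "compact_space T" by (rule pullback_compact[OF cE tT T_def])
  show ?thesis using tT comp haus contf by blast
qed


theorem proposition3p2:
  fixes z :: "'a::metric_space" and X :: "('a \<Rightarrow> real) set"
  assumes "bounded (UNIV :: 'a set)"
    and "isometric_predual z X"
  shows "(\<exists>T :: 'a topology. topspace T = UNIV \<and> compact_space T \<and> Hausdorff_space T \<and>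
            (\<forall>f\<in>X. continuous_map T euclideanreal f))
         \<longleftrightarrow> closedin (weak_top z X) (range (dirac z))"
proof
  assume "\<exists>T :: 'a topology. topspace T = UNIV \<and> compact_space T \<and> Hausdorff_space T \<and>
            (\<forall>f\<in>X. continuous_map T euclideanreal f)"
  then obtain T :: "'a topology" where T: "topspace T = UNIV" "compact_space T" "\<forall>f\<in>X. continuous_map T euclideanreal f"
    by blast
  show "closedin (weak_top z X) (range (dirac z))" by (rule dir1[OF assms(2) T])
next
  assume "closedin (weak_top z X) (range (dirac z))"
  then show "\<exists>T :: 'a topology. topspace T = UNIV \<and> compact_space T \<and> Hausdorff_space T \<and>
            (\<forall>f\<in>X. continuous_map T euclideanreal f)" by (rule dir2[OF assms])
qed

end
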